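(* Let $\gamma>0$ and consider the closed-loop system $$\dot x_1(t)=x_2(t),\qquad \dot x_2(t)=u(t),$$ with the control $$u(t)=-\gamma\,\mathrm{sign}\bigl(x_1(t)\bigr)-\delta(t),\qquad \delta(t)=\begin{cases}|x_2(t)|\,|x_1(t)|^{-1}x_2(t) & \text{if } x_1(t)x_2(t)<0,\\ 0 & \text{otherwise.}\end{cases}$$ Suppose the initial state $x(0)=(x_1(0),x_2(0))$ satisfies $x_1(0)>0$, $x_1(0)x_2(0)<0$ and $x_2^2(0)<2\gamma|x_1(0)|$. Then the solution (while it remains in the fourth quadrant $\{x_1>0,\ x_2<0\}$) is given by $$x_1(t)=-\frac{\gamma}{\omega^2}\cos(\omega t+\phi)+B,\qquad x_2(t)=\frac{\gamma}{\omega}\sin(\omega t+\phi),$$ where $$B=\frac{\gamma\,x_1^2(0)}{2\gamma\,x_1(0)-x_2^2(0)},\qquad \phi=\pi+\arccos\Bigl(1-\frac{x_2^2(0)}{\gamma\,x_1(0)}\Bigr),\qquad \omega=\sqrt{\frac{\gamma}{B}}.$$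
   Context: This is the unperturbed case of a second-order system (double integrator) under a quasi-continuous feedback control. $\mathrm{sign}$ denotes the sign function; $\arccos$ takes values in $[0,\pi]$. *)

theory Defs
  imports "HOL-Analysis.Analysis"
begin

definition qc_delta :: "real \<Rightarrow> real \<Rightarrow> real" where
  "qc_delta x1 x2 = (if x1 * x2 < 0 then \<bar>x2\<bar> * inverse \<bar>x1\<bar> * x2 else 0)"

definition qc_control :: "real \<Rightarrow> real \<Rightarrow> real \<Rightarrow> real" where
  "qc_control \<gamma> x1 x2 = - \<gamma> * sgn x1 - qc_delta x1 x2"

end

theory Submission
  imports Defs
begin

theorem proposition1:
  fixes \<gamma> T :: real and x1 x2 :: "real \<Rightarrow> real"
  assumes gamma_pos: "\<gamma> > 0"
    and T_nonneg: "T \<ge> 0"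
    and ode1: "\<And>t. t \<in> {0..T} \<Longrightarrow> (x1 has_real_derivative x2 t) (at t within {0..T})"
    and ode2: "\<And>t. t \<in> {0..T} \<Longrightarrow>
                 (x2 has_real_derivative qc_control \<gamma> (x1 t) (x2 t)) (at t within {0..T})"
    and quadrant: "\<And>t. t \<in> {0..T} \<Longrightarrow> x1 t > 0 \<and> x2 t < 0"
    and init1: "x1 0 > 0"
    and init2: "x1 0 * x2 0 < 0"
    and init3: "(x2 0)\<^sup>2 < 2 * \<gamma> * \<bar>x1 0\<bar>"
  shows "let B = \<gamma> * (x1 0)\<^sup>2 / (2 * \<gamma> * x1 0 - (x2 0)\<^sup>2);
             \<phi> = pi + arccos (1 - (x2 0)\<^sup>2 / (\<gamma> * x1 0));
             \<omega> = sqrt (\<gamma> / B)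
         in \<forall>t \<in> {0..T}. x1 t = - (\<gamma> / \<omega>\<^sup>2) * cos (\<omega> * t + \<phi>) + B
                         \<and> x2 t = (\<gamma> / \<omega>) * sin (\<omega> * t + \<phi>)"
proof -
  define B where "B = \<gamma> * (x1 0)\<^sup>2 / (2 * \<gamma> * x1 0 - (x2 0)\<^sup>2)"
  define a where "a = 1 - (x2 0)\<^sup>2 / (\<gamma> * x1 0)"
  define \<phi> where "\<phi> = pi + arccos a"
  define \<omega> where "\<omega> = sqrt (\<gamma> / B)"
  have x20: "x2 0 < 0" using init1 init2 by (simp add: mult_less_0_iff)
  have den: "2 * \<gamma> * x1 0 - (x2 0)\<^sup>2 > 0" using init3 init1 by simp
  have Bpos: "B > 0" unfolding B_def using den gamma_pos init1 by simp
  have wpos: "\<omega> > 0" unfolding \<omega>_def using Bpos gamma_pos by simp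
  have w2: "\<omega>\<^sup>2 = \<gamma> / B" unfolding \<omega>_def using Bpos gamma_pos by simp
  have gw2: "\<gamma> / \<omega>\<^sup>2 = B" using w2 gamma_pos Bpos by simp
  have u: "qc_control \<gamma> (x1 t) (x2 t) = - \<gamma> + (x2 t)\<^sup>2 / x1 t" if "t \<in> {0..T}" for t
  proof -
    have q: "x1 t > 0" "x2 t < 0" using quadrant[OF that] by auto
    then have "x1 t * x2 t < 0" by (simp add: mult_pos_neg)
    then show ?thesis using q unfolding qc_control_def qc_delta_def
      by (simp add: power2_eq_square field_simps)
  qed
  define H where "H t = (2 * \<gamma> * x1 t - (x2 t)\<^sup>2) / (x1 t)\<^sup>2" for t
  have "\<exists>C. \<forall>t\<in>{0..T}. H t = C"
  proof (rule has_field_derivative_zero_constant)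
    show "convex {0..T}" by simp
    fix t assume t: "t \<in> {0..T}"
    have q: "x1 t > 0" "x2 t < 0" using quadrant[OF t] by auto
    show "(H has_real_derivative 0) (at t within {0..T})"
      unfolding H_def
      apply (rule derivative_eq_intros ode1[OF t] ode2[OF t] refl)+
      using q by (auto simp: u[OF t] field_simps power2_eq_square)
  qed
  then obtain C where C: "\<And>t. t\<in>{0..T} \<Longrightarrow> H t = C" by blast
  have H0: "H 0 = \<gamma> / B" unfolding H_def B_def using den init1 gamma_pos
    by (simp add: field_simps)
  have Hinv: "(x2 t)\<^sup>2 = 2 * \<gamma> * x1 t - \<gamma> / B * (x1 t)\<^sup>2" if t: "t \<in> {0..T}" for t
  proof -
    have "H t = \<gamma> / B" using C[OF t] C[of 0] T_nonneg H0 by simp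
    then show ?thesis using quadrant[OF t] unfolding H_def by (simp add: field_simps)
  qed
  define c where "c t = 1 - x1 t / B" for t
  define s where "s t = x2 t * \<omega> / \<gamma>" for t
  define E where "E t = (c t - cos (\<omega> * t + \<phi>))\<^sup>2 + (s t - sin (\<omega> * t + \<phi>))\<^sup>2" for t
  have "\<exists>C. \<forall>t\<in>{0..T}. E t = C"
  proof (rule has_field_derivative_zero_constant)
    show "convex {0..T}" by simp
    fix t assume t: "t \<in> {0..T}"
    have q: "x1 t > 0" "x2 t < 0" using quadrant[OF t] by auto
    have dc: "(c has_real_derivative (- \<omega> * s t)) (at t within {0..T})"
    proof -
      have "(c has_real_derivative (- (x2 t / B))) (at t within {0..T})"
        unfolding c_def using DERIV_diff[OF DERIV_const DERIV_cdivide[OF ode1[OF t], of B], of 1] by simp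
      moreover have "- (x2 t / B) = - \<omega> * s t" unfolding s_def
        using w2 gamma_pos Bpos by (simp add: field_simps power2_eq_square)
      ultimately show ?thesis by simp
    qed
    have ds: "(s has_real_derivative (\<omega> * c t)) (at t within {0..T})"
    proof -
      have "(s has_real_derivative (qc_control \<gamma> (x1 t) (x2 t) * \<omega> / \<gamma>)) (at t within {0..T})"
        unfolding s_def using DERIV_cdivide[OF DERIV_cmult_right[OF ode2[OF t], of \<omega>], of \<gamma>] by simp
      moreover have "qc_control \<gamma> (x1 t) (x2 t) * \<omega> / \<gamma> = \<omega> * c t"
        unfolding u[OF t] Hinv[OF t] c_def using q gamma_pos Bpos
        by (simp add: field_simps power2_eq_square)
      ultimately show ?thesis by simp
    qed
    have "(E has_real_derivative
        2 * (c t - cos (\<omega> * t + \<phi>)) * (- \<omega> * s t + sin (\<omega> * t + \<phi>) * \<omega>)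
      + 2 * (s t - sin (\<omega> * t + \<phi>)) * (\<omega> * c t - cos (\<omega> * t + \<phi>) * \<omega>)) (at t within {0..T})"
      unfolding E_def
      apply (rule derivative_eq_intros dc ds refl)+ by (auto simp: algebra_simps)
    moreover have "2 * (c t - cos (\<omega> * t + \<phi>)) * (- \<omega> * s t + sin (\<omega> * t + \<phi>) * \<omega>)
      + 2 * (s t - sin (\<omega> * t + \<phi>)) * (\<omega> * c t - cos (\<omega> * t + \<phi>) * \<omega>) = 0"
      by (simp add: algebra_simps)
    ultimately show "(E has_real_derivative 0) (at t within {0..T})" by simp
  qed
  then obtain D where D: "\<And>t. t\<in>{0..T} \<Longrightarrow> E t = D" by blast
  have r: "(x2 0)\<^sup>2 / (\<gamma> * x1 0) > 0" "(x2 0)\<^sup>2 / (\<gamma> * x1 0) < 2"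
    using x20 init1 gamma_pos init3 by (auto simp: field_simps)
  have a1: "-1 \<le> a" "a \<le> 1" unfolding a_def using r by auto
  have c0: "c 0 = cos \<phi>"
  proof -
    have "cos \<phi> = - a" unfolding \<phi>_def using a1 by simp
    moreover have "c 0 = - a" unfolding c_def a_def B_def using den init1 gamma_pos
      by (simp add: field_simps power2_eq_square)
    ultimately show ?thesis by simp
  qed
  have s0: "s 0 = sin \<phi>"
  proof -
    have sp: "sin \<phi> = - sqrt (1 - a\<^sup>2)" unfolding \<phi>_def using a1 by (simp add: sin_arccos)
    have "(s 0)\<^sup>2 = (x2 0)\<^sup>2 / (\<gamma> * B)" unfolding s_def using w2 gamma_pos
      using Bpos by (simp add: power_mult_distrib power_divide field_simps power2_eq_square)
    also have "\<dots> = 1 - a\<^sup>2" unfolding a_def B_def using den init1 gamma_pos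
      by (simp add: field_simps power2_eq_square)
    finally have "sqrt (1 - a\<^sup>2) = \<bar>s 0\<bar>" by (metis real_sqrt_abs)
    moreover have "s 0 < 0" unfolding s_def using x20 wpos gamma_pos
      by (simp add: mult_neg_pos divide_neg_pos)
    ultimately show ?thesis using sp by simp
  qed
  have E0: "E 0 = 0" unfolding E_def using c0 s0 by simp
  have main: "x1 t = - (\<gamma> / \<omega>\<^sup>2) * cos (\<omega> * t + \<phi>) + B \<and> x2 t = (\<gamma> / \<omega>) * sin (\<omega> * t + \<phi>)"
    if t: "t \<in> {0..T}" for t
  proof -
    have "E t = 0" using D[OF t] D[of 0] T_nonneg E0 by simp
    then have "c t = cos (\<omega> * t + \<phi>)" "s t = sin (\<omega> * t + \<phi>)"
      unfolding E_def by (simp_all add: sum_power2_eq_zero_iff)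
    then show ?thesis unfolding c_def s_def gw2 using Bpos wpos gamma_pos
      by (auto simp: field_simps)
  qed
  show ?thesis unfolding Let_def B_def[symmetric] a_def[symmetric] \<phi>_def[symmetric] \<omega>_def[symmetric]
    using main by blast
qed

end
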